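(* Assume $0<\beta\le\alpha<\sqrt n$ and $e\in\mathbb{R}^n$ satisfies $\|e\|=\sqrt n$. Let $\bar x$ be any point of $\partial K_e(\alpha)$ other than the origin. Assume $v\ne0$ lies in the tangent space to $\partial K_e(\alpha)$ at $\bar x$, and also lies in the tangent space to $\partial K_e(\beta)$ at some point other than the origin. Then the angle $\theta$ between $\bar x$ and $v$ satisfies $|\cos\theta|\le\beta/\alpha$.
   Context: $\mathbb{R}^n$ carries the dot product and Euclidean norm. For $0<\gamma<\sqrt n$, $K_e(\gamma)=\{x:e^Tx\ge\gamma\|x\|\}$, and $\partial$ denotes boundary. For $0\ne z\in\partial K_e(\gamma)$, the tangent space to $\partial K_e(\gamma)$ at $z$ is $\{u:(e^Tz)(e^Tu)-\gamma^2z^Tu=0\}$ (the tangent space of the quadric $(e^Tx)^2-\gamma^2\|x\|^2=0$ at $z$). *)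

theory Defs
  imports "HOL-Analysis.Analysis"
begin

definition Kcone :: "real^'n \<Rightarrow> real \<Rightarrow> (real^'n) set" where
  "Kcone e \<gamma> = {x. \<gamma> * norm x \<le> e \<bullet> x}"

text \<open>Tangent space to the boundary of K_e(gamma) at a nonzero boundary point z
  (tangent space of the quadric (e^T x)^2 - gamma^2 norm x ^2 = 0 at z).\<close>
definition tangent_space :: "real^'n \<Rightarrow> real \<Rightarrow> real^'n \<Rightarrow> (real^'n) set" where
  "tangent_space e \<gamma> z = {u. (e \<bullet> z) * (e \<bullet> u) - \<gamma>^2 * (z \<bullet> u) = 0}"

definition cos_angle :: "real^'n \<Rightarrow> real^'n \<Rightarrow> real" where
  "cos_angle x v = (x \<bullet> v) / (norm x * norm v)"

end

theory Submission
  imports Defs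
begin

lemma frontier_Kcone_eq:
  fixes e x :: "real^'n"
  assumes "x \<in> frontier (Kcone e g)"
  shows "e \<bullet> x = g * norm x"
proof -
  have cl: "closed (Kcone e g)" unfolding Kcone_def
    by (rule closed_Collect_le) (auto intro!: continuous_intros)
  have "x \<in> Kcone e g" using assms cl frontier_subset_closed by blast
  hence le: "g * norm x \<le> e \<bullet> x" by (simp add: Kcone_def)
  have "\<not> (g * norm x < e \<bullet> x)"
  proof
    assume h: "g * norm x < e \<bullet> x"
    have op: "open {y::real^'n. g * norm y < e \<bullet> y}"
      by (rule open_Collect_less) (auto intro!: continuous_intros)
    have sub: "{y::real^'n. g * norm y < e \<bullet> y} \<subseteq> Kcone e g"
      by (auto simp: Kcone_def)
    have "x \<in> interior (Kcone e g)" using interior_maximal[OF sub op] h by blast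
    thus False using assms by (simp add: frontier_def)
  qed
  thus ?thesis using le by linarith
qed

theorem lemma5p2:
  fixes e xbar v :: "real^'n" and \<alpha> \<beta> :: real
  assumes "0 < \<beta>" and "\<beta> \<le> \<alpha>" and "\<alpha> < sqrt (real CARD('n))"
    and "norm e = sqrt (real CARD('n))"
    and "xbar \<in> frontier (Kcone e \<alpha>)" and "xbar \<noteq> 0"
    and "v \<noteq> 0" and "v \<in> tangent_space e \<alpha> xbar"
    and "\<exists>z. z \<in> frontier (Kcone e \<beta>) \<and> z \<noteq> 0 \<and> v \<in> tangent_space e \<beta> z"
  shows "\<bar>cos_angle xbar v\<bar> \<le> \<beta> / \<alpha>"
proof -
  obtain z where z: "z \<in> frontier (Kcone e \<beta>)" "z \<noteq> 0" "v \<in> tangent_space e \<beta> z"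
    using assms(9) by blast
  have a0: "\<alpha> > 0" using assms(1,2) by linarith
  have ex: "e \<bullet> xbar = \<alpha> * norm xbar" using frontier_Kcone_eq assms(5) by blast
  have ez: "e \<bullet> z = \<beta> * norm z" using frontier_Kcone_eq z(1) by blast
  have t1: "\<alpha> * norm xbar * (e \<bullet> v) = \<alpha>^2 * (xbar \<bullet> v)"
    using assms(8) ex by (simp add: tangent_space_def)
  hence "\<alpha> * (norm xbar * (e \<bullet> v)) = \<alpha> * (\<alpha> * (xbar \<bullet> v))"
    by (simp add: power2_eq_square mult.assoc)
  hence t1': "norm xbar * (e \<bullet> v) = \<alpha> * (xbar \<bullet> v)" using a0 by simp
  have t2: "\<beta> * norm z * (e \<bullet> v) = \<beta>^2 * (z \<bullet> v)"
    using z(3) ez by (simp add: tangent_space_def)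
  hence "\<beta> * (norm z * (e \<bullet> v)) = \<beta> * (\<beta> * (z \<bullet> v))"
    by (simp add: power2_eq_square mult.assoc)
  hence t2': "norm z * (e \<bullet> v) = \<beta> * (z \<bullet> v)" using assms(1) by simp
  have "norm z * \<bar>e \<bullet> v\<bar> = \<beta> * \<bar>z \<bullet> v\<bar>" using t2' assms(1)
    by (metis abs_mult abs_norm_cancel abs_of_pos)
  also have "\<dots> \<le> \<beta> * (norm z * norm v)"
    using Cauchy_Schwarz_ineq2 assms(1) by (intro mult_left_mono) auto
  finally have "norm z * \<bar>e \<bullet> v\<bar> \<le> norm z * (\<beta> * norm v)" by (simp add: algebra_simps)
  hence ev: "\<bar>e \<bullet> v\<bar> \<le> \<beta> * norm v" using z(2) by simp
  have nx: "norm xbar > 0" "norm v > 0" using assms(6,7) by auto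
  have "\<alpha> * \<bar>xbar \<bullet> v\<bar> = norm xbar * \<bar>e \<bullet> v\<bar>" using t1' a0
    by (metis abs_mult abs_norm_cancel abs_of_pos)
  also have "\<dots> \<le> norm xbar * (\<beta> * norm v)" using ev by (intro mult_left_mono) auto
  finally have k: "\<alpha> * \<bar>xbar \<bullet> v\<bar> \<le> \<beta> * (norm xbar * norm v)" by (simp add: algebra_simps)
  have "\<bar>cos_angle xbar v\<bar> = \<bar>xbar \<bullet> v\<bar> / (norm xbar * norm v)"
    using nx by (simp add: cos_angle_def abs_divide)
  also have "\<dots> \<le> \<beta> / \<alpha>" using k nx a0
    by (simp add: divide_simps mult.commute)
  finally show ?thesis .
qed

end
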